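(* If $(G,\sigma)$ is a signed graph and $S$ is an $s$-redundant set of $(G,\sigma)$, then $\chi_s(G,\sigma)\le |S|+\chi_s((G,\sigma)-S)$, where $(G,\sigma)-S$ is the signed graph induced on $V(G)\setminus S$.
   Context: A signed graph $(G,\sigma)$ is a simple loopless undirected graph with a signature $\sigma:E(G)\to\{+1,-1\}$. Switching a vertex negates the signs of its incident edges; two signatures are equivalent if one is obtained from the other by switching a set of vertices. A homomorphism of $(G,\sigma)$ to $(H,\pi)$ is a graph homomorphism $\varphi:G\to H$ for which there is a signature $\sigma'$ equivalent to $\sigma$ with $\pi(\varphi(u)\varphi(v))=\sigma'(uv)$ for every edge $uv$; $\chi_s(G,\sigma)$ is the smallest order of a signed graph to which $(G,\sigma)$ admits a homomorphism. A path is unbalanced if the product of its edge signs is $-1$; $UP_3$ denotes an unbalanced path on $3$ vertices. A set $S\subseteq V(G)$ is $s$-redundant if for all $x,y\in V(G)\setminus S$ with $xy\notin E(G)$, every $z\in S$ and every signature $\sigma'$ equivalent to $\sigma$: if $xzy$ is a $UP_3$ in $(G,\sigma')$, then there exists $w\in V(G)\setminus S$ such that $xwy$ is a $UP_3$ in $(G,\sigma')$. *)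

theory Defs
  imports Main
begin

definition signed_graph :: "'a set \<Rightarrow> ('a \<Rightarrow> 'a \<Rightarrow> bool) \<Rightarrow> ('a \<Rightarrow> 'a \<Rightarrow> int) \<Rightarrow> bool" where
  "signed_graph V E sig \<longleftrightarrow>
     (\<forall>u v. E u v \<longrightarrow> u \<in> V \<and> v \<in> V) \<and>
     (\<forall>u v. E u v \<longrightarrow> E v u) \<and>
     (\<forall>u. \<not> E u u) \<and>
     (\<forall>u v. E u v \<longrightarrow> sig u v \<in> {1, -1} \<and> sig u v = sig v u)"

definition switch :: "'a set \<Rightarrow> ('a \<Rightarrow> 'a \<Rightarrow> int) \<Rightarrow> 'a \<Rightarrow> 'a \<Rightarrow> int" where
  "switch X sig u v = (if (u \<in> X) \<noteq> (v \<in> X) then - sig u v else sig u v)"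

definition equiv_sig :: "'a set \<Rightarrow> ('a \<Rightarrow> 'a \<Rightarrow> bool) \<Rightarrow> ('a \<Rightarrow> 'a \<Rightarrow> int) \<Rightarrow> ('a \<Rightarrow> 'a \<Rightarrow> int) \<Rightarrow> bool" where
  "equiv_sig V E sig sig' \<longleftrightarrow> (\<exists>X\<subseteq>V. \<forall>u v. E u v \<longrightarrow> sig' u v = switch X sig u v)"

definition signed_hom ::
  "'a set \<Rightarrow> ('a \<Rightarrow> 'a \<Rightarrow> bool) \<Rightarrow> ('a \<Rightarrow> 'a \<Rightarrow> int) \<Rightarrow>
   'b set \<Rightarrow> ('b \<Rightarrow> 'b \<Rightarrow> bool) \<Rightarrow> ('b \<Rightarrow> 'b \<Rightarrow> int) \<Rightarrow> ('a \<Rightarrow> 'b) \<Rightarrow> bool" where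
  "signed_hom V E sig W F pi phi \<longleftrightarrow>
     (\<forall>v\<in>V. phi v \<in> W) \<and>
     (\<forall>u v. E u v \<longrightarrow> F (phi u) (phi v)) \<and>
     (\<exists>sig'. equiv_sig V E sig sig' \<and> (\<forall>u v. E u v \<longrightarrow> pi (phi u) (phi v) = sig' u v))"

text \<open>Signed chromatic number: least order of a signed graph admitting a homomorphism;
  every finite signed graph is isomorphic to one on vertex set {..<n}.\<close>
definition chi_s :: "'a set \<Rightarrow> ('a \<Rightarrow> 'a \<Rightarrow> bool) \<Rightarrow> ('a \<Rightarrow> 'a \<Rightarrow> int) \<Rightarrow> nat" where
  "chi_s V E sig = (LEAST n. \<exists>(F :: nat \<Rightarrow> nat \<Rightarrow> bool) pi phi.
       signed_graph {..<n} F pi \<and> signed_hom V E sig {..<n} F pi phi)"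

definition del_edges :: "('a \<Rightarrow> 'a \<Rightarrow> bool) \<Rightarrow> 'a set \<Rightarrow> 'a \<Rightarrow> 'a \<Rightarrow> bool" where
  "del_edges E S u v \<longleftrightarrow> E u v \<and> u \<notin> S \<and> v \<notin> S"

definition UP3 :: "('a \<Rightarrow> 'a \<Rightarrow> bool) \<Rightarrow> ('a \<Rightarrow> 'a \<Rightarrow> int) \<Rightarrow> 'a \<Rightarrow> 'a \<Rightarrow> 'a \<Rightarrow> bool" where
  "UP3 E sig x z y \<longleftrightarrow> E x z \<and> E z y \<and> x \<noteq> y \<and> x \<noteq> z \<and> z \<noteq> y \<and> sig x z * sig z y = -1"

definition s_redundant :: "'a set \<Rightarrow> ('a \<Rightarrow> 'a \<Rightarrow> bool) \<Rightarrow> ('a \<Rightarrow> 'a \<Rightarrow> int) \<Rightarrow> 'a set \<Rightarrow> bool" where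
  "s_redundant V E sig S \<longleftrightarrow> S \<subseteq> V \<and>
     (\<forall>x\<in>V - S. \<forall>y\<in>V - S. \<not> E x y \<longrightarrow>
        (\<forall>z\<in>S. \<forall>sig'. equiv_sig V E sig sig' \<longrightarrow>
           UP3 E sig' x z y \<longrightarrow> (\<exists>w\<in>V - S. UP3 E sig' x w y)))"

end

theory Submission
  imports Defs
begin

lemma image_hom:
  assumes sg: "signed_graph V E sig" and eq: "equiv_sig V E sig s2"
  and rng: "\<forall>v\<in>V. psi v < n"
  and ne: "\<forall>u v. E u v \<longrightarrow> psi u \<noteq> psi v"
  and cons: "\<forall>u v u' v'. E u v \<longrightarrow> E u' v' \<longrightarrow> psi u = psi u' \<longrightarrow> psi v = psi v' \<longrightarrow> s2 u v = s2 u' v'"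
  shows "\<exists>(F::nat \<Rightarrow> nat \<Rightarrow> bool) pi. signed_graph {..<n} F pi \<and> signed_hom V E sig {..<n} F pi psi"
proof -
  define F where "F a b = (\<exists>u v. E u v \<and> psi u = a \<and> psi v = b)" for a b
  define pi where "pi a b = (let p = (SOME p. E (fst p) (snd p) \<and> psi (fst p) = a \<and> psi (snd p) = b) in s2 (fst p) (snd p))" for a b
  have key: "pi (psi u) (psi v) = s2 u v" if "E u v" for u v
  proof -
    have "\<exists>p. E (fst p) (snd p) \<and> psi (fst p) = psi u \<and> psi (snd p) = psi v"
      using that by (intro exI[of _ "(u,v)"]) auto
    then have P: "E (fst q) (snd q) \<and> psi (fst q) = psi u \<and> psi (snd q) = psi v"
      if "q = (SOME p. E (fst p) (snd p) \<and> psi (fst p) = psi u \<and> psi (snd p) = psi v)" for q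
      unfolding that by (rule someI_ex)
    have "s2 (fst q) (snd q) = s2 u v"
      if "q = (SOME p. E (fst p) (snd p) \<and> psi (fst p) = psi u \<and> psi (snd p) = psi v)" for q
    proof -
      have "E (fst q) (snd q)" "psi (fst q) = psi u" "psi (snd q) = psi v" using P[OF that] by auto
      then show ?thesis using cons \<open>E u v\<close> by metis
    qed
    then show ?thesis unfolding pi_def Let_def by blast
  qed
  obtain X where X: "X \<subseteq> V" "\<forall>u v. E u v \<longrightarrow> s2 u v = switch X sig u v"
    using eq unfolding equiv_sig_def by blast
  have s2p: "s2 u v \<in> {1,-1} \<and> s2 u v = s2 v u" if "E u v" for u v
  proof -
    have "E v u" using sg that unfolding signed_graph_def by blast
    then show ?thesis using X that sg unfolding signed_graph_def switch_def by auto
  qed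
  have g1: "\<forall>a b. F a b \<longrightarrow> a \<in> {..<n} \<and> b \<in> {..<n}"
  proof (intro allI impI)
    fix a b assume "F a b"
    then obtain u v where "E u v" "psi u = a" "psi v = b" unfolding F_def by blast
    then show "a \<in> {..<n} \<and> b \<in> {..<n}" using rng sg unfolding signed_graph_def by auto
  qed
  have g2: "\<forall>a b. F a b \<longrightarrow> F b a"
    using sg unfolding signed_graph_def F_def by blast
  have g3: "\<forall>a. \<not> F a a" using ne unfolding F_def by metis
  have g4: "\<forall>a b. F a b \<longrightarrow> pi a b \<in> {1, -1} \<and> pi a b = pi b a"
  proof (intro allI impI)
    fix a b assume "F a b"
    then obtain u v where uv: "E u v" "psi u = a" "psi v = b" unfolding F_def by blast
    then have "E v u" using sg unfolding signed_graph_def by blast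
    then show "pi a b \<in> {1, -1} \<and> pi a b = pi b a"
      using key[OF uv(1)] key[OF \<open>E v u\<close>] s2p[OF uv(1)] uv by auto
  qed
  have "signed_graph {..<n} F pi"
    unfolding signed_graph_def using g1 g2 g3 g4 by blast
  moreover have "signed_hom V E sig {..<n} F pi psi"
    unfolding signed_hom_def using rng key eq unfolding F_def by blast
  ultimately show ?thesis by blast
qed

lemma chi_le:
  assumes "signed_graph {..<n} (F::nat\<Rightarrow>nat\<Rightarrow>bool) pi" "signed_hom V E sig {..<n} F pi phi"
  shows "chi_s V E sig \<le> n"
  unfolding chi_s_def by (rule Least_le) (use assms in blast)

lemma chi_ex:
  assumes "finite V" "signed_graph V E sig"
  shows "\<exists>(F::nat\<Rightarrow>nat\<Rightarrow>bool) pi phi. signed_graph {..<chi_s V E sig} F pi \<and> signed_hom V E sig {..<chi_s V E sig} F pi phi"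
proof -
  obtain h where h: "bij_betw h V {0..<card V}" using ex_bij_betw_finite_nat[OF assms(1)] by blast
  have eq: "equiv_sig V E sig sig" unfolding equiv_sig_def switch_def by (intro exI[of _ "{}"]) auto
  have inj: "inj_on h V" using h bij_betw_def by blast
  have rng: "\<forall>v\<in>V. h v < card V" using h unfolding bij_betw_def by auto
  have ne: "\<forall>u v. E u v \<longrightarrow> h u \<noteq> h v"
    using assms(2) inj unfolding signed_graph_def inj_on_def by metis
  have cons: "\<forall>u v u' v'. E u v \<longrightarrow> E u' v' \<longrightarrow> h u = h u' \<longrightarrow> h v = h v' \<longrightarrow> sig u v = sig u' v'"
    using assms(2) inj unfolding signed_graph_def inj_on_def by metis
  have "\<exists>n (F::nat\<Rightarrow>nat\<Rightarrow>bool) pi phi. signed_graph {..<n} F pi \<and> signed_hom V E sig {..<n} F pi phi"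
    using image_hom[OF assms(2) eq rng ne cons] by blast
  then show ?thesis unfolding chi_s_def by (rule LeastI_ex)
qed

theorem theorem5p3:
  fixes V :: "'a set" and E :: "'a \<Rightarrow> 'a \<Rightarrow> bool" and sig :: "'a \<Rightarrow> 'a \<Rightarrow> int" and S :: "'a set"
  assumes "finite V" and "signed_graph V E sig" and "s_redundant V E sig S"
  shows "chi_s V E sig \<le> card S + chi_s (V - S) (del_edges E S) sig"
proof -
  note sg = assms(2)
  have SV: "S \<subseteq> V" using assms(3) unfolding s_redundant_def by blast
  have sg2: "signed_graph (V - S) (del_edges E S) sig"
    using sg unfolding signed_graph_def del_edges_def by blast
  define k where "k = chi_s (V - S) (del_edges E S) sig"
  obtain F :: "nat\<Rightarrow>nat\<Rightarrow>bool" and pi phi where Fg: "signed_graph {..<k} F pi"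
    and hom: "signed_hom (V - S) (del_edges E S) sig {..<k} F pi phi"
    using chi_ex[OF _ sg2] assms(1) unfolding k_def by blast
  obtain sig' where phirng: "\<forall>v\<in>V-S. phi v \<in> {..<k}"
    and phiF: "\<forall>u v. del_edges E S u v \<longrightarrow> F (phi u) (phi v)"
    and eq': "equiv_sig (V - S) (del_edges E S) sig sig'"
    and phipi: "\<forall>u v. del_edges E S u v \<longrightarrow> pi (phi u) (phi v) = sig' u v"
    using hom unfolding signed_hom_def by blast
  obtain X where X: "X \<subseteq> V - S" "\<forall>u v. del_edges E S u v \<longrightarrow> sig' u v = switch X sig u v"
    using eq' unfolding equiv_sig_def by blast
  define s2 where "s2 = switch X sig"
  have eq2: "equiv_sig V E sig s2" unfolding equiv_sig_def s2_def using X by blast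
  have s2p: "s2 u v \<in> {1,-1} \<and> s2 u v = s2 v u" if "E u v" for u v
  proof -
    have "E v u" using sg that unfolding signed_graph_def by blast
    then show ?thesis using that sg unfolding s2_def signed_graph_def switch_def by auto
  qed
  have Esym: "E u v \<Longrightarrow> E v u" for u v using sg unfolding signed_graph_def by blast
  have EV: "E u v \<Longrightarrow> u \<in> V \<and> v \<in> V" for u v using sg unfolding signed_graph_def by blast
  have Eirr: "\<not> E u u" for u using sg unfolding signed_graph_def by blast
  have Firr: "\<not> F a a" for a using Fg unfolding signed_graph_def by blast
  have pisym: "F a b \<Longrightarrow> pi a b \<in> {1,-1} \<and> pi a b = pi b a" for a b
    using Fg unfolding signed_graph_def by blast
  have pis2: "del_edges E S u v \<Longrightarrow> pi (phi u) (phi v) = s2 u v" for u v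
    using phipi X unfolding s2_def by auto
  have red: "\<forall>x\<in>V - S. \<forall>y\<in>V - S. \<not> E x y \<longrightarrow>
        (\<forall>z\<in>S. UP3 E s2 x z y \<longrightarrow> (\<exists>w\<in>V - S. UP3 E s2 x w y))"
    using assms(3) eq2 unfolding s_redundant_def by blast
  have finS: "finite S" using SV assms(1) finite_subset by blast
  obtain g where g: "bij_betw g S {0..<card S}" using ex_bij_betw_finite_nat[OF finS] by blast
  have ginj: "inj_on g S" using g bij_betw_def by blast
  have grng: "\<forall>v\<in>S. g v < card S" using g unfolding bij_betw_def by auto
  define psi where "psi v = (if v \<in> S then k + g v else phi v)" for v
  have rng: "\<forall>v\<in>V. psi v < card S + k" using grng phirng unfolding psi_def by (auto simp add: trans_less_add2)
  have ne: "\<forall>u v. E u v \<longrightarrow> psi u \<noteq> psi v"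
  proof (intro allI impI)
    fix u v assume uv: "E u v"
    show "psi u \<noteq> psi v"
    proof (cases "u \<in> S"; cases "v \<in> S")
      assume "u \<in> S" "v \<in> S" then show ?thesis
        using ginj uv Eirr unfolding psi_def inj_on_def by auto
    next
      assume a: "u \<in> S" "v \<notin> S"
      then have "phi v < k" using phirng EV[OF uv] by blast
      then show ?thesis using a unfolding psi_def by simp
    next
      assume a: "u \<notin> S" "v \<in> S"
      then have "phi u < k" using phirng EV[OF uv] by blast
      then show ?thesis using a unfolding psi_def by simp
    next
      assume "u \<notin> S" "v \<notin> S"
      then have "del_edges E S u v" using uv unfolding del_edges_def by blast
      then show ?thesis using phiF Firr unfolding psi_def by (metis \<open>u \<notin> S\<close> \<open>v \<notin> S\<close>)
    qed
  qed
  have mixed: "s2 u v = s2 u v'" if "u \<in> S" "v \<notin> S" "v' \<notin> S" "E u v" "E u v'" "phi v = phi v'" for u v v'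
  proof (rule ccontr)
    assume neq: "s2 u v \<noteq> s2 u v'"
    then have vv: "v \<noteq> v'" by blast
    have nE: "\<not> E v v'"
    proof
      assume "E v v'"
      then have "del_edges E S v v'" using that unfolding del_edges_def by blast
      then have "F (phi v) (phi v')" using phiF by blast
      then show False using Firr that(6) by simp
    qed
    have vin: "v \<in> V - S" using EV[OF that(4)] that(2) by blast
    have v'in: "v' \<in> V - S" using EV[OF that(5)] that(3) by blast
    have p1: "s2 u v \<in> {1,-1}" using s2p[OF that(4)] by blast
    have p2: "s2 u v' \<in> {1,-1}" using s2p[OF that(5)] by blast
    have sy: "s2 v u = s2 u v" using s2p[OF that(4)] by simp
    have prod: "s2 v u * s2 u v' = -1" unfolding sy using p1 p2 neq by auto
    have uS: "u \<in> S" using that(1) .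
    have ne1: "v \<noteq> u" using that(1,2) by blast
    have ne2: "u \<noteq> v'" using that(1,3) by blast
    have up: "UP3 E s2 v u v'"
      unfolding UP3_def using Esym[OF that(4)] that(5) vv ne1 ne2 prod by blast
    obtain w where w: "w \<in> V - S" "UP3 E s2 v w v'"
      using red[rule_format, OF vin v'in nE uS up] by blast
    have e1: "E v w" and e2: "E w v'" and pr: "s2 v w * s2 w v' = -1"
      using w(2) unfolding UP3_def by blast+
    have d1: "del_edges E S v w" using e1 w(1) that(2) unfolding del_edges_def by blast
    have d2: "del_edges E S w v'" using e2 w(1) that(3) unfolding del_edges_def by blast
    have "F (phi v) (phi w)" using phiF d1 by blast
    then have "pi (phi v) (phi w) \<in> {1,-1}" "pi (phi v) (phi w) = pi (phi w) (phi v)" using pisym by blast+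
    then have "pi (phi v) (phi w) * pi (phi w) (phi v) = 1" by auto
    moreover have "pi (phi v) (phi w) = s2 v w" using pis2[OF d1] .
    moreover have "pi (phi w) (phi v) = s2 w v'" using pis2[OF d2] that(6) by simp
    ultimately show False using pr by simp
  qed
  have sideS: "(x \<in> S) = (y \<in> S) \<and> (x \<in> S \<longrightarrow> x = y) \<and> (x \<notin> S \<longrightarrow> phi x = phi y)"
    if "psi x = psi y" "x \<in> V" "y \<in> V" for x y
  proof (cases "x \<in> S"; cases "y \<in> S")
    assume a: "x \<in> S" "y \<in> S"
    then have "g x = g y" using that(1) unfolding psi_def by simp
    then show ?thesis using a ginj unfolding inj_on_def by blast
  next
    assume a: "x \<in> S" "y \<notin> S"
    then have "phi y < k" using phirng that(3) by blast
    then show ?thesis using a that(1) unfolding psi_def by simp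
  next
    assume a: "x \<notin> S" "y \<in> S"
    then have "phi x < k" using phirng that(2) by blast
    then show ?thesis using a that(1) unfolding psi_def by simp
  next
    assume a: "x \<notin> S" "y \<notin> S"
    then show ?thesis using that(1) unfolding psi_def by simp
  qed
  have cons: "\<forall>u v u' v'. E u v \<longrightarrow> E u' v' \<longrightarrow> psi u = psi u' \<longrightarrow> psi v = psi v' \<longrightarrow> s2 u v = s2 u' v'"
  proof (intro allI impI)
    fix u v u' v' assume uv: "E u v" and uv': "E u' v'" and pu: "psi u = psi u'" and pv: "psi v = psi v'"
    have A: "(u \<in> S) = (u' \<in> S) \<and> (u \<in> S \<longrightarrow> u = u') \<and> (u \<notin> S \<longrightarrow> phi u = phi u')"
      using sideS[OF pu] EV[OF uv] EV[OF uv'] by blast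
    have B: "(v \<in> S) = (v' \<in> S) \<and> (v \<in> S \<longrightarrow> v = v') \<and> (v \<notin> S \<longrightarrow> phi v = phi v')"
      using sideS[OF pv] EV[OF uv] EV[OF uv'] by blast
    show "s2 u v = s2 u' v'"
    proof (cases "u \<in> S"; cases "v \<in> S")
      assume "u \<in> S" "v \<in> S" then show ?thesis using A B by simp
    next
      assume a: "u \<in> S" "v \<notin> S"
      then have b: "u = u'" "v' \<notin> S" "phi v = phi v'" using A B by auto
      have "E u v'" using uv' b(1) by simp
      from mixed[OF a(1) a(2) b(2) uv this b(3)] show ?thesis using b(1) by simp
    next
      assume a: "u \<notin> S" "v \<in> S"
      then have b: "v = v'" "u' \<notin> S" "phi u = phi u'" using A B by auto
      have "E v u'" using Esym[OF uv'] b(1) by simp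
      from mixed[OF a(2) a(1) b(2) Esym[OF uv] this b(3)] have "s2 v u = s2 v u'" .
      moreover have "s2 v u = s2 u v" using s2p[OF uv] by simp
      moreover have "s2 v u' = s2 u' v" using s2p[OF \<open>E v u'\<close>] by simp
      ultimately show ?thesis using b(1) by simp
    next
      assume a: "u \<notin> S" "v \<notin> S"
      then have b: "u' \<notin> S" "v' \<notin> S" "phi u = phi u'" "phi v = phi v'" using A B by auto
      have d: "del_edges E S u v" using uv a unfolding del_edges_def by blast
      have d': "del_edges E S u' v'" using uv' b unfolding del_edges_def by blast
      show ?thesis using pis2[OF d] pis2[OF d'] b(3,4) by simp
    qed
  qed
  obtain F' :: "nat\<Rightarrow>nat\<Rightarrow>bool" and pi' where "signed_graph {..<card S + k} F' pi'"
    "signed_hom V E sig {..<card S + k} F' pi' psi"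
    using image_hom[OF sg eq2 rng ne cons] by blast
  then show ?thesis using chi_le unfolding k_def by blast
qed

end
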